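(* (i) For real $p\neq 0$, the inequality $\frac{2}{3}\left( \frac{\sin x}{x}\right) ^{p}+\frac{1}{3}\left( \frac{\tan x}{x}\right) ^{p}>1$ holds for all $x\in(0,\pi/2)$ if and only if $p>0$ or $p\leq -\frac{\ln 3-\ln 2}{\ln \pi -\ln 2}$. (ii) For real $q\neq 0$, the inequality $\frac{2}{3}\left( \frac{\sin x}{x}\right) ^{q}+\frac{1}{3}\left( \frac{\tan x}{x}\right) ^{q}<1$ holds for all $x\in(0,\pi/2)$ if and only if $-4/5\leq q<0$. *)

theory Defs
  imports Complex_Main
begin

end

theory Submission
  imports Defs "HOL-Analysis.Analysis" "HOL-Real_Asymp.Real_Asymp"
begin


definition Lf :: "real \<Rightarrow> real \<Rightarrow> real" where
 "Lf a x = ln x + ln ((2 + cos x powr a)/3) / a - ln (sin x)"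

definition Wf :: "real \<Rightarrow> real \<Rightarrow> real" where
 "Wf a x = sin x * ((cos x + 2 * cos x powr (1-a)) / (1 + 2 * cos x * cos x powr (1-a))) - x"

lemma cos_sin_pos: assumes "0 < x" "x < pi/2" shows "cos x > 0" "sin x > 0"
  using assms by (auto intro!: cos_gt_zero sin_gt_zero)

lemma Lf_deriv:
  assumes a: "0 < a" and x: "0 < x" "x < pi/2"
  shows "(Lf a has_real_derivative
     (1 + 2 * cos x powr (1-a) * cos x) * Wf a x / (x * sin x * (2 * cos x powr (1-a) + cos x))) (at x)"
proof -
  have c: "cos x > 0" and s: "sin x > 0" using cos_sin_pos[OF x] by auto
  define K where "K = cos x powr (1-a)"
  have K: "K > 0" using c by (simp add: K_def)
  have ca: "cos x powr a = cos x / K"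
    using c unfolding K_def by (simp add: powr_diff)
  have ca1: "cos x powr (a - 1) = 1 / K"
    using c unfolding K_def by (simp add: powr_diff powr_minus_divide[symmetric] flip: powr_minus)
  have "cos x / K > 0" using c K by simp
  then have p: "0 < 2 + cos x / K" by linarith
  have d: "(Lf a has_real_derivative
     (1/x - sin x / (2 * K + cos x) - cos x / sin x)) (at x)"
    unfolding Lf_def using a x c s K p
    apply (auto intro!: derivative_eq_intros simp: ca ca1)
    apply (simp add: divide_simps)
    done
  have "1/x - sin x / (2 * K + cos x) - cos x / sin x
      = (1 + 2 * K * cos x) * Wf a x / (x * sin x * (2 * K + cos x))"
  proof -
    have n1: "1 + 2 * K * cos x > 0" "2 * K + cos x > 0" "1 + 2 * cos x * K > 0" using K c by (simp_all add: add_pos_pos)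
    show ?thesis
    unfolding Wf_def K_def[symmetric] using a x c s K n1
    apply (simp add: divide_simps)
    using sin_cos_squared_add[of x] by algebra
  qed
  then show ?thesis using d by (simp add: K_def)
qed


definition tau :: "real \<Rightarrow> real \<Rightarrow> real" where
 "tau a c = c powr a - 2 * c powr (2 - a) + a * c^2 + (1 - a)"

lemma Wf_deriv:
  assumes c: "cos x > 0"
  shows "(Wf a has_real_derivative
     - 2 * (sin x)^2 * cos x powr (1-a) * tau a (cos x) / (cos x * (1 + 2 * cos x * cos x powr (1-a))^2)) (at x)"
proof -
  define K where "K = cos x powr (1-a)"
  have K: "K > 0" using c by (simp add: K_def)
  have ca: "cos x powr a = cos x / K"
    using c unfolding K_def by (simp add: powr_diff)
  have ca1: "cos x powr (1 - a - 1) = K / cos x"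
    using c unfolding K_def by (simp add: powr_diff powr_minus_divide)
  have ca2: "cos x powr (2 - a) = cos x * K"
  proof -
    have "cos x powr (2 - a) = cos x powr (1 + (1 - a))" by simp
    also have "\<dots> = cos x powr 1 * cos x powr (1 - a)" by (rule powr_add)
    finally show ?thesis using c unfolding K_def by simp
  qed
  have n1: "1 + 2 * cos x * K > 0" using K c by (simp add: add_pos_pos)
  have ca3: "cos x powr - a = K / cos x" using ca1 by simp
  show ?thesis
    unfolding Wf_def K_def[symmetric] tau_def ca ca2 using c K n1
    apply (auto intro!: derivative_eq_intros simp: ca3 K_def[symmetric])
    apply (simp add: divide_simps)
    using sin_cos_squared_add[of x] by algebra
qed


definition tau1 :: "real \<Rightarrow> real \<Rightarrow> real" where
 "tau1 a c = a * c powr (a - 1) - 2 * (2 - a) * c powr (1 - a) + 2 * a * c"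
definition tau2 :: "real \<Rightarrow> real \<Rightarrow> real" where
 "tau2 a c = a * (a - 1) * c powr (a - 2) - 2 * (2 - a) * (1 - a) * c powr (- a) + 2 * a"

lemma tau_deriv: "c > 0 \<Longrightarrow> (tau a has_real_derivative tau1 a c) (at c)"
  unfolding tau_def tau1_def
  by (auto intro!: derivative_eq_intros)

lemma tau1_deriv: "c > 0 \<Longrightarrow> (tau1 a has_real_derivative tau2 a c) (at c)"
  unfolding tau2_def tau1_def
  by (auto intro!: derivative_eq_intros)

lemma tau2_mono: assumes "0 < a" "a < 1" "0 < c" "c < d" shows "tau2 a c < tau2 a d"
proof -
  have "d powr (a - 2) < c powr (a - 2)" using assms by (intro powr_less_mono2_neg) auto
  moreover have "d powr (- a) < c powr (- a)" using assms by (intro powr_less_mono2_neg) auto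
  moreover have "a * (a - 1) < 0" using assms by (simp add: mult_pos_neg)
  moreover have "2 * (2 - a) * (1 - a) > 0" using assms by simp
  ultimately show ?thesis unfolding tau2_def
    by (smt (verit) mult_less_cancel_left_neg mult_less_cancel_left_pos)
qed

lemma tau_one: "tau a 1 = 0" by (simp add: tau_def power2_eq_square)
lemma tau1_one: "tau1 a 1 = 5 * a - 4" by (simp add: tau1_def)

lemma tau_small: assumes "0 < a" "a < 1" "0 < c" "2 * c < 1 - a" shows "tau a c > 0"
proof -
  have h1: "c powr (2 - a) \<le> c" using assms powr_mono'[of 1 "2-a" c] by auto
  have h2: "c powr a \<ge> 0" by simp
  have h3: "a * c^2 \<ge> 0" using assms by simp
  show ?thesis using h1 h2 h3 assms unfolding tau_def by linarith
qed

lemma powr_nat_frac: assumes "c > 0" shows "(c powr (1/5)) ^ n = c powr (real n / 5)"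
  using assms by (simp add: powr_realpow[symmetric] powr_powr)

lemma tau45_pos: assumes "0 < c" "c < 1" shows "tau (4/5) c > 0"
proof -
  define z where "z = c powr (1/5)"
  have z: "0 < z" "z < 1" using assms unfolding z_def using powr_less_mono2[of "1/5" c 1] by auto
  have e4: "c powr (4/5) = z^4" using powr_nat_frac[OF assms(1), of 4] unfolding z_def by simp
  have e6: "c powr (2 - 4/5) = z^6" using powr_nat_frac[OF assms(1), of 6] unfolding z_def by simp
  have e5: "c = z^5" using powr_nat_frac[OF assms(1), of 5] assms unfolding z_def by simp
  define w where "w = z^2"
  have w: "0 < w" "w < 1" using z unfolding w_def by (auto simp: power_less_one_iff)
  have t: "tau (4/5) c = z^4 - 2 * z^6 + 4/5 * (z^5)^2 + (1 - 4/5)"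
    unfolding tau_def by (simp only: e4 e6) (simp add: e5)
  have "tau (4/5) c = (w - 1)^2 * (4 * w^3 + 8 * w^2 + 2 * w + 1) / 5"
    unfolding t w_def by (simp add: field_simps) algebra
  moreover have "(w - 1)^2 > 0" using w by simp
  moreover have "4 * w^3 + 8 * w^2 + 2 * w + 1 > 0" using w by (simp add: add_pos_pos)
  ultimately show ?thesis by (metis divide_pos_pos mult_pos_pos zero_less_numeral)
qed

lemma sign_helper1: "(y::real) > 0 \<Longrightarrow> y * t < 0 \<Longrightarrow> t < 0"
  by (simp add: mult_less_0_iff)
lemma sign_helper2: "(y::real) > 0 \<Longrightarrow> y * t \<ge> 0 \<Longrightarrow> t \<ge> 0"
  by (simp add: zero_le_mult_iff)
lemma sign_helper3: "(y::real) > 0 \<Longrightarrow> y * t > 0 \<Longrightarrow> t > 0"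
  by (simp add: zero_less_mult_iff)

lemma tau_shape:
  assumes a: "4/5 < a" "a < 1" and c: "0 < c2" "c2 < c1" "c1 < 1" and t2: "tau a c2 \<le> 0"
  shows "tau a c1 < 0"
proof (rule ccontr)
  assume "\<not> tau a c1 < 0" hence t1: "tau a c1 \<ge> 0" by simp
  define b where "b = (1-a)/4"
  have b: "0 < b" "2*b < 1-a" using a by (simp_all add: b_def)
  have bc2: "b < c2"
  proof (rule ccontr)
    assume "\<not> b < c2" hence "2 * c2 < 1 - a" using b by linarith
    hence "tau a c2 > 0" using tau_small[of a c2] a c by linarith
    thus False using t2 by simp
  qed
  have tb: "tau a b > 0" using tau_small[of a b] a b by linarith
  have "\<exists>z. b < z \<and> z < c2 \<and> tau a c2 - tau a b = (c2 - b) * tau1 a z"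
    proof (rule MVT2)
      show "b < c2" using bc2 b by linarith
      fix t assume "b \<le> t" "t \<le> c2"
      hence "t > 0" using bc2 b by linarith
      thus "(tau a has_real_derivative tau1 a t) (at t)" by (rule tau_deriv)
    qed
    then obtain x1 where x1: "b < x1" "x1 < c2" "tau a c2 - tau a b = (c2 - b) * tau1 a x1" by blast
  have d1: "tau1 a x1 < 0" by (rule sign_helper1[of "c2 - b"]) (use x1 bc2 tb t2 in linarith)+
  have "\<exists>z. c2 < z \<and> z < c1 \<and> tau a c1 - tau a c2 = (c1 - c2) * tau1 a z"
    proof (rule MVT2)
      show "c2 < c1" using c by linarith
      fix t assume "c2 \<le> t" "t \<le> c1"
      hence "t > 0" using c by linarith
      thus "(tau a has_real_derivative tau1 a t) (at t)" by (rule tau_deriv)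
    qed
    then obtain x2 where x2: "c2 < x2" "x2 < c1" "tau a c1 - tau a c2 = (c1 - c2) * tau1 a x2" by blast
  have d2: "tau1 a x2 \<ge> 0" by (rule sign_helper2[of "c1 - c2"]) (use x2 c t1 t2 in linarith)+
  have td1: "(tau a has_real_derivative tau1 a 1) (at 1)" by (rule tau_deriv) simp
  have "tau1 a 1 > 0" using tau1_one[of a] a by simp
  from DERIV_pos_inc_left[OF td1 this] obtain d where d: "d > 0" "\<And>h. h > 0 \<Longrightarrow> h < d \<Longrightarrow> tau a (1 - h) < tau a 1"
    by blast
  define h where "h = min d (1 - c1) / 2"
  have h: "h > 0" "h < d" "h < 1 - c1" using d c unfolding h_def by auto
  define q where "q = 1 - h"
  have q: "c1 < q" "q < 1" using h unfolding q_def by auto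
  have tq: "tau a q < 0" using d(2)[OF h(1) h(2)] tau_one[of a] unfolding q_def by simp
  have "\<exists>z. c1 < z \<and> z < q \<and> tau a q - tau a c1 = (q - c1) * tau1 a z"
    proof (rule MVT2)
      show "c1 < q" using q c by linarith
      fix t assume "c1 \<le> t" "t \<le> q"
      hence "t > 0" using q c by linarith
      thus "(tau a has_real_derivative tau1 a t) (at t)" by (rule tau_deriv)
    qed
    then obtain x3 where x3: "c1 < x3" "x3 < q" "tau a q - tau a c1 = (q - c1) * tau1 a x3" by blast
  have d3: "tau1 a x3 < 0" by (rule sign_helper1[of "q - c1"]) (use x3 t1 tq in linarith)+
  have "\<exists>z. x1 < z \<and> z < x2 \<and> tau1 a x2 - tau1 a x1 = (x2 - x1) * tau2 a z"
    proof (rule MVT2)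
      show "x1 < x2" using x1 x2 b by linarith
      fix t assume "x1 \<le> t" "t \<le> x2"
      hence "t > 0" using x1 x2 b by linarith
      thus "(tau1 a has_real_derivative tau2 a t) (at t)" by (rule tau1_deriv)
    qed
    then obtain z1 where z1: "x1 < z1" "z1 < x2" "tau1 a x2 - tau1 a x1 = (x2 - x1) * tau2 a z1" by blast
  have e1: "tau2 a z1 > 0" by (rule sign_helper3[of "x2 - x1"]) (use z1 d1 d2 in linarith)+
  have "\<exists>z. x2 < z \<and> z < x3 \<and> tau1 a x3 - tau1 a x2 = (x3 - x2) * tau2 a z"
    proof (rule MVT2)
      show "x2 < x3" using x2 x3 c by linarith
      fix t assume "x2 \<le> t" "t \<le> x3"
      hence "t > 0" using x2 x3 c by linarith
      thus "(tau1 a has_real_derivative tau2 a t) (at t)" by (rule tau1_deriv)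
    qed
    then obtain z2 where z2: "x2 < z2" "z2 < x3" "tau1 a x3 - tau1 a x2 = (x3 - x2) * tau2 a z2" by blast
  have e2: "tau2 a z2 < 0" by (rule sign_helper1[of "x3 - x2"]) (use z2 d2 d3 in linarith)+
  have "tau2 a z1 < tau2 a z2" using z1 z2 x1 b by (intro tau2_mono) (use a in linarith)+
  thus False using e1 e2 by simp
qed



definition Wd :: "real \<Rightarrow> real \<Rightarrow> real" where
  "Wd a x = - 2 * (sin x)^2 * cos x powr (1-a) * tau a (cos x) / (cos x * (1 + 2 * cos x * cos x powr (1-a))^2)"

lemma Wf_deriv': "cos x > 0 \<Longrightarrow> (Wf a has_real_derivative Wd a x) (at x)"
  unfolding Wd_def by (rule Wf_deriv)

lemma Wf_zero: "Wf a 0 = 0" by (simp add: Wf_def)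

lemma Wd_sign:
  assumes "0 < x" "x < pi/2"
  shows "Wd a x < 0 \<longleftrightarrow> tau a (cos x) > 0" "Wd a x > 0 \<longleftrightarrow> tau a (cos x) < 0"
proof -
  have c: "cos x > 0" and s: "sin x > 0" using cos_sin_pos[OF assms] by auto
  define P where "P = 2 * (sin x)^2 * cos x powr (1-a) / (cos x * (1 + 2 * cos x * cos x powr (1-a))^2)"
  have "1 + 2 * cos x * cos x powr (1-a) > 0" using c by (simp add: add_pos_pos)
  hence P: "P > 0" using c s unfolding P_def by (intro divide_pos_pos mult_pos_pos) auto
  have e: "Wd a x = - (P * tau a (cos x))" unfolding Wd_def P_def by simp
  show "Wd a x < 0 \<longleftrightarrow> tau a (cos x) > 0" "Wd a x > 0 \<longleftrightarrow> tau a (cos x) < 0"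
    unfolding e using P by (auto simp: zero_less_mult_iff mult_less_0_iff)
qed

lemma Wf_cont: assumes "0 \<le> u" "v < pi/2" shows "continuous_on {u..v} (Wf a)"
proof -
  have "\<forall>x\<in>{u..v}. isCont (Wf a) x"
  proof
    fix x assume "x \<in> {u..v}"
    hence "cos x > 0" using assms by (intro cos_gt_zero_pi) auto
    thus "isCont (Wf a) x" using Wf_deriv' DERIV_isCont by blast
  qed
  thus ?thesis by (simp add: continuous_at_imp_continuous_on)
qed

lemma Wd_shape:
  assumes a: "4/5 < a" "a < 1" and x: "0 < u" "u < v" "v < pi/2" and "Wd a u \<le> 0"
  shows "Wd a v < 0"
proof -
  have tu: "tau a (cos u) \<ge> 0" using Wd_sign[of u a] assms by linarith
  have cv: "0 < cos v" "cos v < cos u" "cos u < 1" using x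
    by (auto intro!: cos_gt_zero cos_monotone_0_pi cos_monotone_0_pi[of 0 u, simplified])
  have "tau a (cos v) > 0"
  proof (rule ccontr)
    assume "\<not> tau a (cos v) > 0"
    hence "tau a (cos u) < 0" using tau_shape[of a "cos v" "cos u"] a cv by linarith
    thus False using tu by simp
  qed
  thus ?thesis using Wd_sign[of v a] x by simp
qed



definition Ld :: "real \<Rightarrow> real \<Rightarrow> real" where
  "Ld a x = (1 + 2 * cos x powr (1-a) * cos x) * Wf a x / (x * sin x * (2 * cos x powr (1-a) + cos x))"

lemma Lf_deriv': "0 < a \<Longrightarrow> 0 < x \<Longrightarrow> x < pi/2 \<Longrightarrow> (Lf a has_real_derivative Ld a x) (at x)"
  unfolding Ld_def by (rule Lf_deriv)

lemma Ld_sign: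
  assumes "0 < x" "x < pi/2"
  shows "Ld a x > 0 \<longleftrightarrow> Wf a x > 0" "Ld a x < 0 \<longleftrightarrow> Wf a x < 0"
proof -
  have c: "cos x > 0" and s: "sin x > 0" using cos_sin_pos[OF assms] by auto
  define P where "P = (1 + 2 * cos x powr (1-a) * cos x) / (x * sin x * (2 * cos x powr (1-a) + cos x))"
  have "1 + 2 * cos x powr (1-a) * cos x > 0" "2 * cos x powr (1-a) + cos x > 0"
    using c by (simp_all add: add_pos_pos)
  hence P: "P > 0" using c s assms unfolding P_def by (intro divide_pos_pos mult_pos_pos) auto
  have e: "Ld a x = P * Wf a x" unfolding Ld_def P_def by simp
  show "Ld a x > 0 \<longleftrightarrow> Wf a x > 0" "Ld a x < 0 \<longleftrightarrow> Wf a x < 0"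
    unfolding e using P by (auto simp: zero_less_mult_iff mult_less_0_iff)
qed

lemma W_mvt:
  assumes "0 \<le> u" "u < v" "v < pi/2"
  shows "\<exists>z. u < z \<and> z < v \<and> Wf a v - Wf a u = (v - u) * Wd a z"
proof (rule MVT2)
  show "u < v" by fact
  fix t assume "u \<le> t" "t \<le> v"
  hence "cos t > 0" using assms by (intro cos_gt_zero_pi) auto
  thus "(Wf a has_real_derivative Wd a t) (at t)" by (rule Wf_deriv')
qed

lemma W_pos_init:
  assumes a: "4/5 < a" "a < 1" and x: "0 < x0" "x0 < pi/2" "Wf a x0 > 0" and y: "0 < y" "y \<le> x0"
  shows "Wf a y > 0"
proof (rule ccontr)
  assume "\<not> Wf a y > 0" hence wy: "Wf a y \<le> 0" by simp
  hence "y < x0" using x y by (cases "y = x0") auto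
  obtain z1 where z1: "0 < z1" "z1 < y" "Wf a y - Wf a 0 = (y - 0) * Wd a z1"
    using W_mvt[of 0 y a] y x by auto
  have "Wd a z1 \<le> 0"
  proof (rule ccontr)
    assume "\<not> Wd a z1 \<le> 0" hence "y * Wd a z1 > 0" using y by simp
    thus False using z1 wy by (simp add: Wf_zero)
  qed
  obtain z2 where z2: "y < z2" "z2 < x0" "Wf a x0 - Wf a y = (x0 - y) * Wd a z2"
    using W_mvt[of y x0 a] y x \<open>y < x0\<close> by auto
  have "Wd a z2 > 0"
  proof (rule ccontr)
    assume "\<not> Wd a z2 > 0" hence "(x0 - y) * Wd a z2 \<le> 0" using \<open>y < x0\<close> by (simp add: mult_nonneg_nonpos)
    thus False using z2 wy x by linarith
  qed
  moreover have "Wd a z2 < 0" using Wd_shape[of a z1 z2] a z1 z2 x \<open>Wd a z1 \<le> 0\<close> by linarith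
  ultimately show False by simp
qed

lemma W_neg_tail:
  assumes a: "4/5 < a" "a < 1" and x: "0 < x0" "x0 < y" "y < pi/2" "Wf a x0 \<le> 0"
  shows "Wf a y < 0"
proof -
  obtain z1 where z1: "0 < z1" "z1 < x0" "Wf a x0 - Wf a 0 = (x0 - 0) * Wd a z1"
    using W_mvt[of 0 x0 a] x by auto
  have wz: "Wd a z1 \<le> 0"
  proof (rule ccontr)
    assume "\<not> Wd a z1 \<le> 0" hence "x0 * Wd a z1 > 0" using x by simp
    thus False using z1 x by (simp add: Wf_zero)
  qed
  have "Wf a x0 > Wf a y"
  proof (rule DERIV_neg_imp_decreasing[OF x(2)])
    fix t assume t: "x0 \<le> t" "t \<le> y"
    have "cos t > 0" using t x by (intro cos_gt_zero_pi) auto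
    moreover have "Wd a t < 0" using Wd_shape[of a z1 t] a z1 t x wz by linarith
    ultimately show "\<exists>d. (Wf a has_real_derivative d) (at t) \<and> d < 0" using Wf_deriv' by blast
  qed
  thus ?thesis using x by linarith
qed

lemma Lf_lim0: assumes "0 < a" shows "((Lf a) \<longlongrightarrow> 0) (at_right 0)"
proof -
  have 1: "((\<lambda>x::real. ln x - ln (sin x)) \<longlongrightarrow> 0) (at_right 0)" by real_asymp
  have 2: "((\<lambda>x. ln ((2 + cos x powr a)/3) / a) \<longlongrightarrow> ln ((2 + cos 0 powr a)/3) / a) (at_right 0)"
  proof -
    have "((\<lambda>x::real. cos x) \<longlongrightarrow> cos 0) (at_right 0)"
      by (rule tendsto_mono[OF at_le[OF subset_UNIV]]) (use isCont_cos[of "0::real"] in \<open>simp add: isCont_def\<close>)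
    hence "((\<lambda>x. cos x powr a) \<longlongrightarrow> cos 0 powr a) (at_right 0)" by (rule tendsto_powr) auto
    hence "((\<lambda>x. (2 + cos x powr a)/3) \<longlongrightarrow> (2 + cos 0 powr a)/3) (at_right 0)"
      by (intro tendsto_divide tendsto_add tendsto_const) simp_all
    hence "((\<lambda>x. ln ((2 + cos x powr a)/3)) \<longlongrightarrow> ln ((2 + cos 0 powr a)/3)) (at_right 0)" by (rule tendsto_ln) simp
    thus ?thesis by (intro tendsto_divide tendsto_const) (use assms in simp_all)
  qed
  have "((\<lambda>x. (ln x - ln (sin x)) + ln ((2 + cos x powr a)/3) / a) \<longlongrightarrow> 0 + ln ((2 + cos 0 powr a)/3) / a) (at_right 0)"
    by (intro tendsto_add 1 2)
  thus ?thesis unfolding Lf_def by (simp add: algebra_simps)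
qed

lemma Lf_lim_pi2: assumes "0 < a"
  shows "((Lf a) \<longlongrightarrow> ln (pi/2) + ln (2/3) / a) (at_left (pi/2))"
proof -
  let ?F = "at_left (pi/2::real)"
  have id: "((\<lambda>x::real. x) \<longlongrightarrow> pi/2) ?F" by (rule tendsto_ident_at)
  have c: "((\<lambda>x::real. cos x) \<longlongrightarrow> 0) ?F"
    by (rule tendsto_mono[OF at_le[OF subset_UNIV]]) (use isCont_cos[of "pi/2::real"] in \<open>simp add: isCont_def\<close>)
  have s: "((\<lambda>x::real. sin x) \<longlongrightarrow> 1) ?F"
    by (rule tendsto_mono[OF at_le[OF subset_UNIV]]) (use isCont_sin[of "pi/2::real"] in \<open>simp add: isCont_def\<close>)
  have ev: "eventually (\<lambda>x. 0 \<le> cos x) ?F"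
    by (rule eventually_at_leftI[of 0]) (auto intro!: cos_ge_zero)
  have cp: "((\<lambda>x. cos x powr a) \<longlongrightarrow> 0) ?F"
    by (rule tendsto_zero_powrI[OF c tendsto_const ev assms])
  have 1: "((\<lambda>x. ln x) \<longlongrightarrow> ln (pi/2)) ?F" by (rule tendsto_ln[OF id]) simp
  have 2: "((\<lambda>x. ln ((2 + cos x powr a)/3) / a) \<longlongrightarrow> ln ((2 + 0)/3) / a) ?F"
    by (intro tendsto_divide tendsto_ln tendsto_add tendsto_const cp) (use assms in simp_all)
  have 3: "((\<lambda>x. ln (sin x)) \<longlongrightarrow> ln 1) ?F" by (rule tendsto_ln[OF s]) simp
  have "((\<lambda>x. ln x + ln ((2 + cos x powr a)/3) / a - ln (sin x)) \<longlongrightarrow> ln (pi/2) + ln ((2 + 0)/3) / a - ln 1) ?F"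
    by (intro tendsto_diff tendsto_add 1 2 3)
  thus ?thesis unfolding Lf_def by simp
qed

lemma L_pos_of_W_pos:
  assumes a: "0 < a" and x: "0 < x0" "x0 < pi/2" and W: "\<And>y. 0 < y \<Longrightarrow> y \<le> x0 \<Longrightarrow> Wf a y > 0"
  shows "Lf a x0 > 0"
proof -
  have inc: "Lf a y < Lf a z" if "0 < y" "y < z" "z \<le> x0" for y z
  proof (rule DERIV_pos_imp_increasing[OF that(2)])
    fix t assume "y \<le> t" "t \<le> z"
    hence t: "0 < t" "t < pi/2" "t \<le> x0" using that x by auto
    have "Ld a t > 0" using Ld_sign[of t a] W[of t] t by simp
    thus "\<exists>d. (Lf a has_real_derivative d) (at t) \<and> 0 < d" using Lf_deriv'[OF a t(1,2)] by blast
  qed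
  define m where "m = x0 / 2"
  have m: "0 < m" "m < x0" using x by (auto simp: m_def)
  have "0 \<le> Lf a m"
  proof (rule tendsto_upperbound[OF Lf_lim0[OF a]])
    show "\<forall>\<^sub>F i in at_right 0. Lf a i \<le> Lf a m"
      by (rule eventually_at_rightI[of _ m]) (use inc m in \<open>auto intro: less_imp_le\<close>)
  qed simp
  thus ?thesis using inc[of m x0] m by simp
qed

lemma L_neg_of_W_neg:
  assumes a: "0 < a" and x: "0 < x0" "x0 < pi/2" and W: "\<And>y. 0 < y \<Longrightarrow> y \<le> x0 \<Longrightarrow> Wf a y < 0"
  shows "Lf a x0 < 0"
proof -
  have dec: "Lf a y > Lf a z" if "0 < y" "y < z" "z \<le> x0" for y z
  proof (rule DERIV_neg_imp_decreasing[OF that(2)])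
    fix t assume "y \<le> t" "t \<le> z"
    hence t: "0 < t" "t < pi/2" "t \<le> x0" using that x by auto
    have "Ld a t < 0" using Ld_sign[of t a] W[of t] t by simp
    thus "\<exists>d. (Lf a has_real_derivative d) (at t) \<and> d < 0" using Lf_deriv'[OF a t(1,2)] by blast
  qed
  define m where "m = x0 / 2"
  have m: "0 < m" "m < x0" using x by (auto simp: m_def)
  have "Lf a m \<le> 0"
  proof (rule tendsto_lowerbound[OF Lf_lim0[OF a]])
    show "\<forall>\<^sub>F i in at_right 0. Lf a m \<le> Lf a i"
      by (rule eventually_at_rightI[of _ m]) (use dec m in \<open>auto intro: less_imp_le\<close>)
  qed simp
  thus ?thesis using dec[of m x0] m by simp
qed

lemma L_pos_of_W_tail:
  assumes a: "0 < a" and x: "0 < x0" "x0 < pi/2"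
    and W: "\<And>y. x0 < y \<Longrightarrow> y < pi/2 \<Longrightarrow> Wf a y < 0"
    and lim: "((Lf a) \<longlongrightarrow> 0) (at_left (pi/2))"
  shows "Lf a x0 > 0"
proof -
  have dec: "Lf a y > Lf a z" if "x0 \<le> y" "y < z" "z < pi/2" for y z
  proof (rule DERIV_neg_imp_decreasing_open[OF that(2)])
    fix t assume "y < t" "t < z"
    hence t: "0 < t" "t < pi/2" "x0 < t" using that x by auto
    have "Ld a t < 0" using Ld_sign[of t a] W[of t] t by simp
    thus "\<exists>d. (Lf a has_real_derivative d) (at t) \<and> d < 0" using Lf_deriv'[OF a t(1,2)] by blast
  next
    have "\<forall>t\<in>{y..z}. isCont (Lf a) t"
    proof
      fix t assume "t \<in> {y..z}"
      hence "0 < t" "t < pi/2" using that x by auto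
      thus "isCont (Lf a) t" using Lf_deriv'[OF a] DERIV_isCont by blast
    qed
    thus "continuous_on {y..z} (Lf a)" by (simp add: continuous_at_imp_continuous_on)
  qed
  define m where "m = (x0 + pi/2) / 2"
  have m: "x0 < m" "m < pi/2" using x by (auto simp: m_def)
  have "0 \<le> Lf a m"
  proof (rule tendsto_upperbound[OF lim])
    show "\<forall>\<^sub>F i in at_left (pi/2). Lf a i \<le> Lf a m"
      by (rule eventually_at_leftI[of m]) (use dec m in \<open>auto intro: less_imp_le\<close>)
  qed simp
  thus ?thesis using dec[of x0 m] m by simp
qed



definition r0 :: real where "r0 = (ln 3 - ln 2) / (ln pi - ln 2)"

lemma lnpi2_pos: "ln pi - ln 2 > 0"
  using pi_gt3 by (simp add: ln_less_cancel_iff)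

lemma r0_lt1: "r0 < 1"
proof -
  have "ln 3 < ln pi" using pi_gt3 by simp
  thus ?thesis unfolding r0_def using lnpi2_pos by (simp add: divide_less_eq)
qed

lemma r0_gt: "4/5 < r0"
proof -
  have p: "pi ^ 4 < 243 / 2"
  proof -
    have h: "pi ^ 4 \<le> 3.2 ^ 4" using pi_approx(2) by (intro power_mono) auto
    have "(3.2::real) ^ 4 < 243 / 2" by (simp add: power_divide)
    thus ?thesis using h by linarith
  qed
  have "ln (pi ^ 4) < ln (243/2)" using p by (simp add: ln_less_cancel_iff)
  also have "ln (243/2) = 5 * ln 3 - ln (2::real)"
  proof -
    have "ln (243/2) = ln (3^5) - ln (2::real)" by (simp add: ln_div)
    also have "ln ((3::real)^5) = real 5 * ln 3" by (rule ln_realpow)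
    finally show ?thesis by simp
  qed
  finally have "4 * ln pi < 5 * ln 3 - ln 2" by (simp add: ln_realpow)
  thus ?thesis unfolding r0_def using lnpi2_pos by (simp add: less_divide_eq)
qed

lemma r0_lim: "ln (pi/2) + ln (2/3) / r0 = 0"
proof -
  have "ln 3 - ln 2 > (0::real)" by (simp add: ln_less_cancel_iff)
  thus ?thesis unfolding r0_def using lnpi2_pos
    by (simp add: ln_div field_simps)
qed

theorem A0: assumes "0 < x" "x < pi/2" shows "Lf r0 x > 0"
proof -
  have a: "4/5 < r0" "r0 < 1" "0 < r0" using r0_gt r0_lt1 by auto
  show ?thesis
  proof (cases "Wf r0 x > 0")
    case True
    show ?thesis
      by (rule L_pos_of_W_pos[OF a(3) assms]) (use W_pos_init[OF a(1,2) assms True] in auto)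
  next
    case False
    show ?thesis
    proof (rule L_pos_of_W_tail[OF a(3) assms])
      show "((Lf r0) \<longlongrightarrow> 0) (at_left (pi/2))" using Lf_lim_pi2[OF a(3)] r0_lim by simp
      fix y assume "x < y" "y < pi/2"
      thus "Wf r0 y < 0" using W_neg_tail[OF a(1,2) assms(1)] False by simp
    qed
  qed
qed

theorem B0: assumes "0 < x" "x < pi/2" shows "Lf (4/5) x < 0"
proof (rule L_neg_of_W_neg[OF _ assms])
  fix y assume y: "0 < y" "y \<le> x"
  have "Wf (4/5) 0 > Wf (4/5) y"
  proof (rule DERIV_neg_imp_decreasing_open[OF y(1)])
    fix t assume t: "0 < t" "t < y"
    hence t': "0 < t" "t < pi/2" using y assms by auto
    have "0 < cos t" "cos t < 1" using t' cos_sin_pos[OF t'] cos_monotone_0_pi[of 0 t] by auto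
    hence "tau (4/5) (cos t) > 0" by (rule tau45_pos)
    hence "Wd (4/5) t < 0" using Wd_sign[OF t'] by simp
    thus "\<exists>d. (Wf (4/5) has_real_derivative d) (at t) \<and> d < 0"
      using Wf_deriv'[of t] cos_sin_pos[OF t'] by blast
  next
    show "continuous_on {0..y} (Wf (4/5))" by (rule Wf_cont) (use y assms in auto)
  qed
  thus "Wf (4/5) y < 0" by (simp add: Wf_zero)
qed simp

theorem Dloc: assumes a: "4/5 < a" "a < 1" shows "\<exists>x. 0 < x \<and> x < pi/2 \<and> Lf a x > 0"
proof -
  have td1: "(tau a has_real_derivative tau1 a 1) (at 1)" by (rule tau_deriv) simp
  have "tau1 a 1 > 0" using tau1_one[of a] a by simp
  from DERIV_pos_inc_left[OF td1 this] obtain d where d: "d > 0" "\<And>h. h > 0 \<Longrightarrow> h < d \<Longrightarrow> tau a (1 - h) < tau a 1"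
    by blast
  have "((\<lambda>x::real. cos x) \<longlongrightarrow> 1) (at_right 0)"
    by (rule tendsto_mono[OF at_le[OF subset_UNIV]]) (use isCont_cos[of "0::real"] in \<open>simp add: isCont_def\<close>)
  hence "eventually (\<lambda>x. cos x > 1 - d) (at_right 0)" using d(1) by (intro order_tendstoD) auto
  then obtain b where b: "b > 0" "\<And>y. 0 < y \<Longrightarrow> y < b \<Longrightarrow> cos y > 1 - d"
    unfolding eventually_at_right_field by auto
  define x0 where "x0 = min (b/2) 1"
  have x0: "0 < x0" "x0 < b" "x0 < pi/2" using b pi_gt3 unfolding x0_def by auto
  have W: "Wf a y > 0" if y: "0 < y" "y \<le> x0" for y
  proof -
    have "Wf a 0 < Wf a y"
    proof (rule DERIV_pos_imp_increasing_open[OF y(1)])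
      fix t assume t: "0 < t" "t < y"
      hence t': "0 < t" "t < pi/2" using y x0 by auto
      have "cos t < 1" using t' cos_monotone_0_pi[of 0 t] by auto
      moreover have "cos t > 1 - d" using b(2)[of t] t y x0 by auto
      ultimately have "tau a (1 - (1 - cos t)) < tau a 1" using d(2)[of "1 - cos t"] by auto
      hence "tau a (cos t) < 0" using tau_one[of a] by simp
      hence "Wd a t > 0" using Wd_sign[OF t'] by simp
      thus "\<exists>d. (Wf a has_real_derivative d) (at t) \<and> d > 0"
        using Wf_deriv'[of t] cos_sin_pos[OF t'] by blast
    next
      show "continuous_on {0..y} (Wf a)" by (rule Wf_cont) (use y x0 in auto)
    qed
    thus ?thesis by (simp add: Wf_zero)
  qed
  have "Lf a x0 > 0" by (rule L_pos_of_W_pos[OF _ x0(1) x0(3) W]) (use a in auto)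
  thus ?thesis using x0 by blast
qed

theorem Cpt: assumes a: "0 < a" "a < r0" shows "\<exists>x. 0 < x \<and> x < pi/2 \<and> Lf a x < 0"
proof -
  have "ln (pi/2) + ln (2/3) / a < 0"
  proof -
    have "a * (ln pi - ln 2) < ln 3 - ln 2" using a lnpi2_pos unfolding r0_def by (simp add: less_divide_eq)
    hence "ln (pi/2) * a < - ln (2/3)" by (simp add: ln_div algebra_simps)
    thus ?thesis using a by (simp add: field_simps)
  qed
  hence "eventually (\<lambda>x. Lf a x < 0) (at_left (pi/2))"
    using Lf_lim_pi2[OF a(1)] by (intro order_tendstoD) auto
  moreover have "eventually (\<lambda>x. 0 < x \<and> x < pi/2) (at_left (pi/2))"
    by (rule eventually_at_leftI[of 0]) auto
  ultimately have "eventually (\<lambda>x. 0 < x \<and> x < pi/2 \<and> Lf a x < 0) (at_left (pi/2))"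
    by eventually_elim auto
  from eventually_happens[OF this] show ?thesis by simp
qed



definition G :: "real \<Rightarrow> real \<Rightarrow> real" where
  "G p x = 2/3 * (sin x / x) powr p + 1/3 * (tan x / x) powr p"

lemma G_exp: assumes a: "0 < a" and x: "0 < x" "x < pi/2"
  shows "G (-a) x = exp (a * Lf a x)"
proof -
  have c: "cos x > 0" and s: "sin x > 0" using cos_sin_pos[OF x] by auto
  define E where "E = exp (a * (ln x - ln (sin x)))"
  have e1: "(sin x / x) powr (-a) = E"
    unfolding E_def using c s x by (simp add: powr_def ln_div algebra_simps)
  have e2: "(tan x / x) powr (-a) = E * cos x powr a"
  proof -
    have "tan x / x = sin x / (cos x * x)" by (simp add: tan_def)
    thus ?thesis unfolding E_def using c s x
      by (simp add: powr_def ln_div ln_mult algebra_simps flip: exp_add)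
  qed
  have q: "(2 + cos x powr a) / 3 > 0" by (simp add: add_pos_nonneg)
  have e3: "exp (a * Lf a x) = E * ((2 + cos x powr a) / 3)"
  proof -
    have "a * Lf a x = a * (ln x - ln (sin x)) + ln ((2 + cos x powr a) / 3)"
      unfolding Lf_def using a by (simp add: algebra_simps)
    thus ?thesis unfolding E_def using q by (simp add: exp_add)
  qed
  show ?thesis unfolding G_def e1 e2 e3 by (simp add: algebra_simps)
qed

lemma G_zero: assumes "0 < x" "x < pi/2" shows "G 0 x = 1"
proof -
  have c: "cos x > 0" and s: "sin x > 0" using cos_sin_pos[OF assms] by auto
  have "tan x > 0" using c s assms by (simp add: tan_def)
  thus ?thesis unfolding G_def using s assms by simp
qed

lemma powr_convex: fixes u t p q :: real assumes "u > 0" "0 \<le> t" "t \<le> 1"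
  shows "u powr ((1 - t) * p + t * q) \<le> (1 - t) * u powr p + t * u powr q"
proof -
  have "exp ((1 - t) *\<^sub>R (p * ln u) + t *\<^sub>R (q * ln u)) \<le> (1 - t) * exp (p * ln u) + t * exp (q * ln u)"
    by (rule convex_onD[OF exp_convex]) (use assms in auto)
  thus ?thesis using assms by (simp add: powr_def algebra_simps)
qed

lemma lin_helper: fixes A B C D :: real shows "A \<le> B \<Longrightarrow> C \<le> D \<Longrightarrow> 2/3*A + 1/3*C \<le> 2/3*B + 1/3*D"
  by linarith

lemma conv_helper: fixes gz gb gp t :: real
  assumes "gz \<le> (1-t)*gb + t*gp" "gz = 1" "gb < 1" "0 < t" "t < 1"
  shows "gp > 1"
proof -
  have "(1-t)*gb < (1-t)*1" using assms by (intro mult_strict_left_mono) auto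
  hence "t*1 < t*gp" using assms by (smt (verit))
  thus ?thesis using assms by simp
qed

lemma conv_helper2: fixes gz ga gp t :: real
  assumes "ga \<le> (1-t)*gz + t*gp" "gz = 1" "ga > 1" "0 < t" "t \<le> 1"
  shows "gp > 1"
proof -
  have "ga \<le> (1-t) + t*gp" using assms by simp
  hence "t*1 < t*gp" using assms by (smt (verit))
  thus ?thesis using assms by simp
qed

lemma G_convex: assumes "0 < x" "x < pi/2" "0 \<le> t" "t \<le> 1"
  shows "G ((1 - t) * p + t * q) x \<le> (1 - t) * G p x + t * G q x"
proof -
  have c: "cos x > 0" and s: "sin x > 0" using cos_sin_pos[OF assms(1,2)] by auto
  have 1: "sin x / x > 0" using s assms by simp
  have 2: "tan x / x > 0" using c s assms by (simp add: tan_def)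
  let ?e = "(1 - t) * p + t * q"
  have "2/3 * (sin x / x) powr ?e + 1/3 * (tan x / x) powr ?e \<le>
     2/3 * ((1 - t) * (sin x / x) powr p + t * (sin x / x) powr q) + 1/3 * ((1 - t) * (tan x / x) powr p + t * (tan x / x) powr q)"
    using powr_convex[OF 1 assms(3,4), of p q] powr_convex[OF 2 assms(3,4), of p q] by (rule lin_helper)
  also have "\<dots> = (1 - t) * G p x + t * G q x" unfolding G_def by (simp add: field_simps)
  finally show ?thesis unfolding G_def .
qed

lemma G_A: assumes "0 < x" "x < pi/2" shows "G (-r0) x > 1"
  using G_exp[OF _ assms, of r0] A0[OF assms] r0_gt by simp

lemma G_B: assumes "0 < x" "x < pi/2" shows "G (-(4/5)) x < 1"
  using G_exp[OF _ assms, of "4/5"] B0[OF assms] by simp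

lemma part1_rev: assumes "p > 0 \<or> p \<le> -r0" "0 < x" "x < pi/2" shows "G p x > 1"
  using assms(1)
proof
  assume p: "p > 0"
  define t where "t = (4/5) / (p + 4/5)"
  have t: "0 < t" "t < 1" using p unfolding t_def by (auto simp: field_simps)
  have eq: "(1 - t) * (-(4/5)) + t * p = 0" using p unfolding t_def by (simp add: field_simps)
  have "G ((1 - t) * (-(4/5)) + t * p) x \<le> (1 - t) * G (-(4/5)) x + t * G p x"
    using G_convex[OF assms(2,3), of t "-(4/5)" p] t by simp
  hence "G 0 x \<le> (1 - t) * G (-(4/5)) x + t * G p x" unfolding eq .
  thus ?thesis using G_zero[OF assms(2,3)] G_B[OF assms(2,3)] t
    by (intro conv_helper[where gz="G 0 x" and gb="G (-(4/5)) x" and gp="G p x" and t=t]) auto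
next
  assume p: "p \<le> -r0"
  have r: "0 < r0" using r0_gt by simp
  define t where "t = r0 / (- p)"
  have t: "0 < t" "t \<le> 1" using p r unfolding t_def by (auto simp: field_simps)
  have eq: "(1 - t) * 0 + t * p = - r0" using p r unfolding t_def by (simp add: field_simps)
  have "G ((1 - t) * 0 + t * p) x \<le> (1 - t) * G 0 x + t * G p x"
    using G_convex[OF assms(2,3), of t 0 p] t by simp
  hence "G (-r0) x \<le> (1 - t) * G 0 x + t * G p x" unfolding eq .
  thus ?thesis using G_zero[OF assms(2,3)] G_A[OF assms(2,3)] t
    by (intro conv_helper2[where gz="G 0 x" and ga="G (-r0) x" and gp="G p x" and t=t]) auto
qed

lemma part2_rev: assumes "-(4/5) \<le> q" "q < 0" "0 < x" "x < pi/2" shows "G q x < 1"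
proof -
  define t where "t = - q * 5 / 4"
  have t: "0 < t" "t \<le> 1" using assms unfolding t_def by auto
  have eq: "(1 - t) * 0 + t * (-(4/5)) = q" unfolding t_def by simp
  have "G ((1 - t) * 0 + t * (-(4/5))) x \<le> (1 - t) * G 0 x + t * G (-(4/5)) x"
    using G_convex[OF assms(3,4), of t 0 "-(4/5)"] t by simp
  hence "G q x \<le> (1 - t) * G 0 x + t * G (-(4/5)) x" unfolding eq .
  moreover have "t * G (-(4/5)) x < t * 1" using G_B[OF assms(3,4)] t by simp
  ultimately show ?thesis using G_zero[OF assms(3,4)] by simp
qed

theorem proposition4p1:
  shows "(\<forall>p::real. p \<noteq> 0 \<longrightarrow>
           ((\<forall>x::real. 0 < x \<and> x < pi / 2 \<longrightarrow>
               2/3 * (sin x / x) powr p + 1/3 * (tan x / x) powr p > 1)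
            \<longleftrightarrow> (p > 0 \<or> p \<le> - ((ln 3 - ln 2) / (ln pi - ln 2))))) \<and>
         (\<forall>q::real. q \<noteq> 0 \<longrightarrow>
           ((\<forall>x::real. 0 < x \<and> x < pi / 2 \<longrightarrow>
               2/3 * (sin x / x) powr q + 1/3 * (tan x / x) powr q < 1)
            \<longleftrightarrow> (-4/5 \<le> q \<and> q < 0)))"
proof -
  have P1: "(\<forall>x. 0 < x \<and> x < pi / 2 \<longrightarrow> G p x > 1) \<longleftrightarrow> (p > 0 \<or> p \<le> -r0)" if "p \<noteq> 0" for p
  proof
    assume H: "\<forall>x. 0 < x \<and> x < pi / 2 \<longrightarrow> G p x > 1"
    show "p > 0 \<or> p \<le> -r0"
    proof (rule ccontr)
      assume "\<not> (p > 0 \<or> p \<le> -r0)"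
      hence a: "0 < -p" "-p < r0" using that by auto
      obtain x where x: "0 < x" "x < pi/2" "Lf (-p) x < 0" using Cpt[OF a] by blast
      have "-p * Lf (-p) x < 0" by (rule mult_pos_neg) (use x a in auto)
      hence lt: "exp (-p * Lf (-p) x) < 1" by simp
      have "G p x = exp (-p * Lf (-p) x)" using G_exp[OF a(1) x(1,2)] by simp
      hence "G p x < 1" using lt by simp
      moreover have "G p x > 1" using H x(1,2) by blast
      ultimately show False by simp
    qed
  next
    assume "p > 0 \<or> p \<le> -r0"
    thus "\<forall>x. 0 < x \<and> x < pi / 2 \<longrightarrow> G p x > 1" using part1_rev by blast
  qed
  have P2: "(\<forall>x. 0 < x \<and> x < pi / 2 \<longrightarrow> G q x < 1) \<longleftrightarrow> (-4/5 \<le> q \<and> q < 0)" if "q \<noteq> 0" for q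
  proof
    assume H: "\<forall>x. 0 < x \<and> x < pi / 2 \<longrightarrow> G q x < 1"
    have x4: "0 < pi/4" "pi/4 < pi/2" using pi_gt_zero by auto
    show "-4/5 \<le> q \<and> q < 0"
    proof (rule ccontr)
      assume nq: "\<not> (-4/5 \<le> q \<and> q < 0)"
      show False
      proof (cases "q > 0 \<or> q \<le> -r0")
        case True
        have "G q (pi/4) > 1" by (rule part1_rev[OF True x4])
        moreover have "G q (pi/4) < 1" using H x4 by blast
        ultimately show False by simp
      next
        case False
        hence a: "4/5 < -q" "-q < 1" using nq that r0_lt1 by auto
        obtain x where x: "0 < x" "x < pi/2" "Lf (-q) x > 0" using Dloc[OF a] by blast
        have "-q * Lf (-q) x > 0" by (rule mult_pos_pos) (use x a in auto)
        hence gt: "exp (-q * Lf (-q) x) > 1" by simp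
        have "G q x = exp (-q * Lf (-q) x)" using G_exp[of "-q" x] x a by simp
        hence "G q x > 1" using gt by simp
        moreover have "G q x < 1" using H x(1,2) by blast
        ultimately show False by simp
      qed
    qed
  next
    assume "-4/5 \<le> q \<and> q < 0"
    thus "\<forall>x. 0 < x \<and> x < pi / 2 \<longrightarrow> G q x < 1" using part2_rev by auto
  qed
  show ?thesis
  proof (intro conjI allI impI)
    fix p :: real assume "p \<noteq> 0"
    from P1[OF this] show "(\<forall>x::real. 0 < x \<and> x < pi / 2 \<longrightarrow>
               2/3 * (sin x / x) powr p + 1/3 * (tan x / x) powr p > 1)
            \<longleftrightarrow> (p > 0 \<or> p \<le> - ((ln 3 - ln 2) / (ln pi - ln 2)))" unfolding G_def r0_def .
  next
    fix q :: real assume "q \<noteq> 0"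
    from P2[OF this] show "(\<forall>x::real. 0 < x \<and> x < pi / 2 \<longrightarrow>
               2/3 * (sin x / x) powr q + 1/3 * (tan x / x) powr q < 1)
            \<longleftrightarrow> (-4/5 \<le> q \<and> q < 0)" unfolding G_def .
  qed
qed

end
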